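(* Let $(\mathbb{R}^d,H,\mathcal{L})$ be a cut-and-project scheme such that $\mathcal{L}$ and $\mathcal{L}^\circ$ are both countable. Let $D$ be a lattice in $\mathbb{R}^d$ such that $D\cap\pi^G(\mathcal{L})=\{0\}$ and $D^\circ\cap\pi^{\widehat G}(\mathcal{L}^\circ)=\{0\}$. Let $\mathbb{K}=\mathbb{R}^d/D$ with quotient map $\psi:\mathbb{R}^d\to\mathbb{K}$. Then: (a) $\psi$ is injective on $\pi^G(\mathcal{L})$, and $\psi(\pi^G(\mathcal{L}))$ is dense in $\mathbb{K}$; (b) for every non-empty open set $U\subseteq H$ the set $\psi(\Lambda_U)$ is dense in $\mathbb{K}$.
   Context: $G=\mathbb{R}^d$. A cut-and-project scheme $(G,H,\mathcal{L})$ consists of locally compact abelian groups $G,H$ and a discrete cocompact subgroup $\mathcal{L}\subseteq G\times H$ such that $\pi^G|_{\mathcal{L}}$ is injective and $\pi^H(\mathcal{L})$ is dense in $H$; $\Lambda_U=\pi^G(\mathcal{L}\cap(G\times U))$. The dual group $\widehat G$ of $\mathbb{R}^d$ is identified with $\mathbb{R}^d$ via $x\mapsto(y\mapsto e^{2\pi i\langle x,y\rangle})$; $\mathcal{L}^\circ=\{(\chi,\eta)\in\widehat G\times\widehat H:\chi(g)\eta(h)=1\text{ for all }(g,h)\in\mathcal L\}$ is the annihilator of $\mathcal L$, and $\pi^{\widehat G}$ is the projection to $\widehat G$. For a lattice $D\subseteq\mathbb R^d$, $D^\circ=\{x\in\mathbb{R}^d:\langle y,x\rangle\in\mathbb{Z}\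 \forall y\in D\}$. *)

theory Defs
  imports "HOL-Analysis.Analysis"
begin

definition add_subgroup :: "'a::ab_group_add set \<Rightarrow> bool" where
  "add_subgroup S \<longleftrightarrow> 0 \<in> S \<and> (\<forall>x\<in>S. \<forall>y\<in>S. x + y \<in> S) \<and> (\<forall>x\<in>S. - x \<in> S)"

definition discrete_set :: "'a::topological_space set \<Rightarrow> bool" where
  "discrete_set S \<longleftrightarrow> (\<forall>x\<in>S. \<exists>U. open U \<and> U \<inter> S = {x})"

definition cocompact :: "'a::{topological_space, ab_group_add} set \<Rightarrow> bool" where
  "cocompact S \<longleftrightarrow> (\<exists>K. compact K \<and> (\<forall>z. \<exists>s\<in>S. \<exists>k\<in>K. z = s + k))"

definition lattice_in :: "'a::{topological_space, ab_group_add} set \<Rightarrow> bool" where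
  "lattice_in S \<longleftrightarrow> add_subgroup S \<and> discrete_set S \<and> cocompact S"

text \<open>H is locally compact abelian (Hausdorff is built into the type class t2_space).\<close>
definition LCA_type :: "'h::{topological_ab_group_add, t2_space} itself \<Rightarrow> bool" where
  "LCA_type _ \<longleftrightarrow> locally_compact_space (euclidean :: 'h topology)"

definition characters :: "('h::{topological_ab_group_add} \<Rightarrow> complex) set" where
  "characters = {\<eta>. continuous_on UNIV \<eta> \<and> (\<forall>x. norm (\<eta> x) = 1) \<and>
                    (\<forall>x y. \<eta> (x + y) = \<eta> x * \<eta> y)}"

definition charG :: "'a::euclidean_space \<Rightarrow> 'a \<Rightarrow> complex" where
  "charG \<xi> y = exp (2 * of_real pi * \<i> * of_real (\<xi> \<bullet> y))"

definition cut_and_project ::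
  "('a::euclidean_space \<times> 'h::{topological_ab_group_add, t2_space}) set \<Rightarrow> bool" where
  "cut_and_project L \<longleftrightarrow> LCA_type TYPE('h) \<and> lattice_in L \<and> inj_on fst L \<and>
      closure (snd ` L) = UNIV"

definition annihilator ::
  "('a::euclidean_space \<times> 'h::topological_ab_group_add) set \<Rightarrow> ('a \<times> ('h \<Rightarrow> complex)) set" where
  "annihilator L = {(\<xi>, \<eta>). \<eta> \<in> characters \<and> (\<forall>(g, h)\<in>L. charG \<xi> g * \<eta> h = 1)}"

definition model_set :: "('a \<times> 'h) set \<Rightarrow> 'h set \<Rightarrow> 'a set" where
  "model_set L U = fst ` (L \<inter> (UNIV \<times> U))"

definition dual_lattice :: "'a::euclidean_space set \<Rightarrow> 'a set" where
  "dual_lattice D = {x. \<forall>y\<in>D. y \<bullet> x \<in> \<int>}"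

definition qmap :: "'a::ab_group_add set \<Rightarrow> 'a \<Rightarrow> 'a set" where
  "qmap D x = (\<lambda>y. x + y) ` D"

definition quot_top :: "'a::{topological_space, ab_group_add} set \<Rightarrow> 'a set topology" where
  "quot_top D = topology (\<lambda>S. S \<subseteq> range (qmap D) \<and> open (qmap D -` S))"

lemma openin_quot_top:
  "openin (quot_top D) S \<longleftrightarrow> S \<subseteq> range (qmap D) \<and> open (qmap D -` S)"
proof -
  have "istopology (\<lambda>S. S \<subseteq> range (qmap D) \<and> open (qmap D -` S))"
    unfolding istopology_def by (auto simp: vimage_Union)
  then show ?thesis unfolding quot_top_def by simp
qed

end

theory Submission
  imports Defs
begin


lemma subgroup_int_mult:
  fixes N :: "'a::real_vector set"
  assumes "add_subgroup N" "x \<in> N"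
  shows "of_int k *\<^sub>R x \<in> N"
proof -
  have nat: "of_nat m *\<^sub>R x \<in> N" for m
  proof (induction m)
    case 0 then show ?case using assms by (simp add: add_subgroup_def)
  next
    case (Suc m)
    then have "of_nat m *\<^sub>R x + x \<in> N" using assms by (simp add: add_subgroup_def)
    then show ?case by (simp add: algebra_simps)
  qed
  show ?thesis
  proof (cases "k \<ge> 0")
    case True
    then have "of_int k *\<^sub>R x = of_nat (nat k) *\<^sub>R x" by simp
    then show ?thesis using nat[of "nat k"] by (simp only:)
  next
    case False
    then have "of_int k *\<^sub>R x = - (of_nat (nat (-k)) *\<^sub>R x)" by simp
    moreover have "- (of_nat (nat (-k)) *\<^sub>R x) \<in> N"
      using nat assms(1) by (simp add: add_subgroup_def)
    ultimately show ?thesis by (simp only:)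
  qed
qed

lemma line_or_discrete:
  fixes N :: "'a::euclidean_space set"
  assumes cl: "closed N" and sg: "add_subgroup N"
  shows "(\<exists>u. u \<noteq> 0 \<and> (\<forall>t. t *\<^sub>R u \<in> N)) \<or> (\<exists>e>0. \<forall>x\<in>N. x \<noteq> 0 \<longrightarrow> e \<le> norm x)"
proof (rule disjCI)
  assume "\<not> (\<exists>e>0. \<forall>x\<in>N. x \<noteq> 0 \<longrightarrow> e \<le> norm x)"
  then have "\<forall>e>0. \<exists>x\<in>N. x \<noteq> 0 \<and> norm x < e" by (auto simp: not_le)
  then have "\<forall>n. \<exists>x. x \<in> N \<and> x \<noteq> 0 \<and> norm x < inverse (real (Suc n))"
    by (metis of_nat_0_less_iff positive_imp_inverse_positive zero_less_Suc)
  then obtain x where x: "\<And>n. x n \<in> N" "\<And>n. x n \<noteq> 0" "\<And>n. norm (x n) < inverse (real (Suc n))"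
    by metis
  define s where "s n = x n /\<^sub>R norm (x n)" for n
  have "s n \<in> sphere 0 1" for n using x(2) by (simp add: s_def)
  then obtain u r where u: "u \<in> sphere 0 1" and r: "strict_mono r" and lim: "(s \<circ> r) \<longlonglongrightarrow> u"
    using compact_imp_seq_compact[OF compact_sphere, of 0 1] unfolding seq_compact_def by metis
  have "u \<noteq> 0" using u by auto
  moreover have "t *\<^sub>R u \<in> N" for t
  proof -
    define z where "z n = of_int (floor (t / norm (x (r n)))) *\<^sub>R x (r n)" for n
    have zN: "z n \<in> N" for n unfolding z_def by (rule subgroup_int_mult[OF sg x(1)])
    have "(\<lambda>n. z n - t *\<^sub>R s (r n)) \<longlonglongrightarrow> 0"
    proof (rule Lim_null_comparison)
      show "\<forall>\<^sub>F n in sequentially. norm (z n - t *\<^sub>R s (r n)) \<le> inverse (real (Suc n))"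
      proof (intro always_eventually allI)
        fix n
        define a where "a = norm (x (r n))"
        have a: "a > 0" using x(2) by (simp add: a_def)
        have "z n - t *\<^sub>R s (r n) = (of_int (floor (t / a)) - t / a) *\<^sub>R x (r n)"
          by (simp add: z_def s_def a_def algebra_simps divide_inverse)
        then have "norm (z n - t *\<^sub>R s (r n)) = \<bar>of_int (floor (t / a)) - t / a\<bar> * a"
          by (simp add: a_def)
        also have "\<dots> \<le> 1 * a"
          using a by (intro mult_right_mono) (linarith, simp)
        also have "\<dots> < inverse (real (Suc (r n)))" using x(3) by (simp add: a_def)
        also have "\<dots> \<le> inverse (real (Suc n))"
          using seq_suble[OF r, of n] by (simp add: le_imp_inverse_le)
        finally show "norm (z n - t *\<^sub>R s (r n)) \<le> inverse (real (Suc n))" by simp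
      qed
      show "(\<lambda>n. inverse (real (Suc n))) \<longlonglongrightarrow> 0" by (rule LIMSEQ_inverse_real_of_nat)
    qed
    moreover have "(\<lambda>n. t *\<^sub>R s (r n)) \<longlonglongrightarrow> t *\<^sub>R u"
      using lim by (intro tendsto_scaleR tendsto_const) (simp add: o_def)
    ultimately have "(\<lambda>n. (z n - t *\<^sub>R s (r n)) + t *\<^sub>R s (r n)) \<longlonglongrightarrow> 0 + t *\<^sub>R u"
      by (rule tendsto_add)
    then have "z \<longlonglongrightarrow> t *\<^sub>R u" by simp
    then show ?thesis using closed_sequentially[OF cl] zN by blast
  qed
  ultimately show "\<exists>u. u \<noteq> 0 \<and> (\<forall>t. t *\<^sub>R u \<in> N)" by blast
qed

lemma proj_facts:
  fixes u :: "'a::euclidean_space"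
  assumes "u \<noteq> 0" and P_def: "\<And>x. P x = x - ((u \<bullet> x) / (u \<bullet> u)) *\<^sub>R u"
  shows "u \<bullet> P x = 0" "P (x + y) = P x + P y" "P (- x) = - P x" "P (x - k *\<^sub>R u) = P x"
    "x = P x + ((u \<bullet> x) / (u \<bullet> u)) *\<^sub>R u" "P 0 = 0"
proof -
  have uu: "u \<bullet> u \<noteq> 0" using assms(1) by simp
  show "u \<bullet> P x = 0" using uu by (simp add: P_def inner_diff_right)
  show "P (x + y) = P x + P y" by (simp add: P_def inner_add_right add_divide_distrib scaleR_add_left)
  show "P (- x) = - P x" by (simp add: P_def)
  show "P (x - k *\<^sub>R u) = P x" using uu
    by (simp add: P_def inner_diff_right diff_divide_distrib scaleR_diff_left)
  show "x = P x + ((u \<bullet> x) / (u \<bullet> u)) *\<^sub>R u" by (simp add: P_def)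
  show "P 0 = 0" by (simp add: P_def)
qed

lemma inner_orth_expand:
  fixes y u :: "'a::euclidean_space" assumes "y \<bullet> u = 0" "u \<bullet> y = 0"
  shows "(y + c *\<^sub>R u) \<bullet> (y + c *\<^sub>R u) = y \<bullet> y + c^2 * (u \<bullet> u)"
  using assms by (simp add: inner_add_left inner_add_right power2_eq_square)

lemma discrete_key:
  fixes u n :: "'a::euclidean_space"
  assumes u0: "u \<noteq> 0" and Pd: "\<And>x. P x = x - ((u \<bullet> x) / (u \<bullet> u)) *\<^sub>R u"
    and sg: "add_subgroup N" and uN: "u \<in> N" and nN: "n \<in> N"
    and umin': "\<And>y. y \<in> N \<Longrightarrow> y \<noteq> 0 \<Longrightarrow> norm u \<le> norm y"
    and y0: "P n \<noteq> 0"
  shows "norm u / 2 \<le> norm (P n)"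
proof -
  note pf = proj_facts[OF u0 Pd]
  define y where "y = P n"
  define t where "t = (u \<bullet> n) / (u \<bullet> u)"
  define m where "m = round t"
  define n' where "n' = n - of_int m *\<^sub>R u"
  have n'N: "n' \<in> N" unfolding n'_def using sg nN subgroup_int_mult[OF sg uN, of m]
    unfolding add_subgroup_def by (metis diff_conv_add_uminus)
  have Pn': "P n' = y" unfolding n'_def y_def by (rule pf(4))
  have "n' \<noteq> 0"
  proof
    assume "n' = 0"
    then have "y = 0" using Pn' pf(6) by simp
    then show False using y0 y_def by simp
  qed
  then have nu: "norm u \<le> norm n'" using umin' n'N by blast
  have ny: "n = y + t *\<^sub>R u"
    using pf(5)[of n] unfolding y_def[symmetric] t_def[symmetric] .
  have n'eq: "n' = y + (t - of_int m) *\<^sub>R u"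
    unfolding n'_def ny by (simp add: algebra_simps)
  have yu: "u \<bullet> y = 0" using pf(1) y_def by simp
  then have yu': "y \<bullet> u = 0" by (simp add: inner_commute)
  have "n' \<bullet> n' = y \<bullet> y + (t - of_int m)^2 * (u \<bullet> u)"
    unfolding n'eq by (rule inner_orth_expand[OF yu' yu])
  moreover have "(t - of_int m)^2 \<le> (1/2)^2"
  proof -
    have "\<bar>t - of_int m\<bar> \<le> \<bar>1/2\<bar>" using of_int_round_abs_le[of t] unfolding m_def
      by (simp add: abs_minus_commute)
    then show ?thesis by (simp only: abs_le_square_iff)
  qed
  then have "(t - of_int m)^2 * (u \<bullet> u) \<le> (1/2)^2 * (u \<bullet> u)"
    by (intro mult_right_mono) simp_all
  ultimately have "n' \<bullet> n' \<le> y \<bullet> y + (1/4) * (u \<bullet> u)"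
    by (simp add: power2_eq_square)
  moreover have "u \<bullet> u \<le> n' \<bullet> n'" using nu by (simp add: norm_le)
  ultimately have "u \<bullet> u \<le> 4 * (y \<bullet> y)" using inner_ge_zero[of y] by linarith
  then have "(norm u / 2)^2 \<le> (norm y)^2"
    by (simp add: power2_norm_eq_inner power_divide)
  then show ?thesis unfolding y_def[symmetric] by (rule power2_le_imp_le) simp
qed

lemma discrete_line:
  fixes u n :: "'a::euclidean_space"
  assumes u0: "u \<noteq> 0" and Pd: "\<And>x. P x = x - ((u \<bullet> x) / (u \<bullet> u)) *\<^sub>R u"
    and sg: "add_subgroup N" and uN: "u \<in> N" and nN: "n \<in> N"
    and umin': "\<And>y. y \<in> N \<Longrightarrow> y \<noteq> 0 \<Longrightarrow> norm u \<le> norm y"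
    and P0: "P n = 0"
  shows "(u /\<^sub>R (u \<bullet> u)) \<bullet> n \<in> \<int>"
proof -
  note pf = proj_facts[OF u0 Pd]
  define t where "t = (u \<bullet> n) / (u \<bullet> u)"
  have neq: "n = t *\<^sub>R u"
    using pf(5)[of n] unfolding t_def[symmetric] P0 by simp
  define m where "m = round t"
  define n' where "n' = n - of_int m *\<^sub>R u"
  have n'N: "n' \<in> N" unfolding n'_def using sg nN subgroup_int_mult[OF sg uN, of m]
    unfolding add_subgroup_def by (metis diff_conv_add_uminus)
  have n'eq: "n' = (t - of_int m) *\<^sub>R u" unfolding n'_def neq by (simp add: algebra_simps)
  then have "norm n' = \<bar>t - of_int m\<bar> * norm u" by simp
  also have "\<dots> \<le> (1/2) * norm u"
    using of_int_round_abs_le[of t] unfolding m_def by (intro mult_right_mono) (auto simp: abs_minus_commute)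
  also have "\<dots> < norm u" using u0 by simp
  finally have "n' = 0" using umin' n'N by force
  then have "t = of_int m" using n'eq u0 by simp
  moreover have "(u /\<^sub>R (u \<bullet> u)) \<bullet> n = t" by (simp add: t_def divide_inverse mult.commute)
  ultimately show ?thesis by simp
qed
lemma closed_subgroup_dual:
  fixes N W :: "'a::euclidean_space set"
  assumes "subspace W" "N \<subseteq> W" "closed N" "add_subgroup N" "N \<noteq> W"
  shows "\<exists>\<xi>\<in>W. \<xi> \<noteq> 0 \<and> (\<forall>n\<in>N. \<xi> \<bullet> n \<in> \<int>)"
  using assms
proof (induction "dim W" arbitrary: W N rule: less_induct)
  case less
  note sW = less.prems(1) and NW = less.prems(2) and cl = less.prems(3) and sg = less.prems(4)
    and ne = less.prems(5)
  have N0: "0 \<in> N" and Nadd: "\<And>a b. a \<in> N \<Longrightarrow> b \<in> N \<Longrightarrow> a + b \<in> N"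
    and Nneg: "\<And>a. a \<in> N \<Longrightarrow> - a \<in> N"
    using sg by (auto simp: add_subgroup_def)
  have Ndiff: "a - b \<in> N" if "a \<in> N" "b \<in> N" for a b
    using Nadd[OF that(1) Nneg[OF that(2)]] by simp
  show ?case
  proof (cases "N = {0}")
    case True
    then obtain w where "w \<in> W" "w \<noteq> 0"
      using ne NW subspace_0[OF sW] by blast
    then show ?thesis using True by auto
  next
    case False
    then obtain x0 where x0: "x0 \<in> N" "x0 \<noteq> 0" using N0 by blast
    have dimless: "dim (W \<inter> {x. u \<bullet> x = 0}) < dim W" and sW': "subspace (W \<inter> {x. u \<bullet> x = 0})"
      if "u \<in> W" "u \<noteq> 0" for u
    proof -
      show s': "subspace (W \<inter> {x. u \<bullet> x = 0})"
        by (intro subspace_inter sW subspace_hyperplane)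
      have "u \<notin> {x. u \<bullet> x = 0}" using that by simp
      then have "W \<inter> {x. u \<bullet> x = 0} \<subset> W" using that by blast
      then show "dim (W \<inter> {x. u \<bullet> x = 0}) < dim W"
        using s' sW by (intro dim_psubset) (simp add: span_eq_iff[THEN iffD2])
    qed
    from line_or_discrete[OF cl sg] show ?thesis
    proof
      assume "\<exists>u. u \<noteq> 0 \<and> (\<forall>t. t *\<^sub>R u \<in> N)"
      then obtain u where u: "u \<noteq> 0" "\<And>t. t *\<^sub>R u \<in> N" by blast
      define P where "P \<equiv> (\<lambda>x. x - ((u \<bullet> x) / (u \<bullet> u)) *\<^sub>R u)"
      have Pd: "\<And>x. P x = x - ((u \<bullet> x) / (u \<bullet> u)) *\<^sub>R u" by (simp add: P_def)
      note pf = proj_facts[OF u(1) Pd]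
      have uW: "u \<in> W" using u(2)[of 1] NW by auto
      define W' where "W' = W \<inter> {x. u \<bullet> x = 0}"
      define N' where "N' = N \<inter> {x. u \<bullet> x = 0}"
      have PN: "P n \<in> N" if "n \<in> N" for n
        using Ndiff[OF that u(2)] by (simp add: P_def)
      have "N' \<noteq> W'"
      proof
        assume eq: "N' = W'"
        have "W \<subseteq> N"
        proof
          fix w assume w: "w \<in> W"
          have "P w \<in> W" unfolding P_def using w uW sW by (intro subspace_diff subspace_scale) auto
          then have "P w \<in> N" using eq pf(1) unfolding W'_def N'_def by auto
          then have "P w + ((u \<bullet> w) / (u \<bullet> u)) *\<^sub>R u \<in> N" using Nadd u(2) by blast
          then show "w \<in> N" by (simp only: pf(5)[of w, symmetric])
        qed
        then show False using ne NW by blast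
      qed
      moreover have "closed N'" unfolding N'_def
        by (intro closed_Int cl closed_hyperplane)
      moreover have "add_subgroup N'" using sg unfolding N'_def add_subgroup_def
        by (auto simp: inner_add_right)
      moreover have "N' \<subseteq> W'" using NW unfolding N'_def W'_def by auto
      ultimately obtain \<xi> where xi: "\<xi> \<in> W'" "\<xi> \<noteq> 0" "\<forall>n\<in>N'. \<xi> \<bullet> n \<in> \<int>"
        using less.hyps[OF dimless[OF uW u(1)] sW'[OF uW u(1)]] unfolding W'_def by blast
      have "\<xi> \<bullet> n \<in> \<int>" if n: "n \<in> N" for n
      proof -
        have "P n \<in> N'" using PN[OF n] pf(1) by (simp add: N'_def)
        then have "\<xi> \<bullet> P n \<in> \<int>" using xi by blast
        moreover have "\<xi> \<bullet> P n = \<xi> \<bullet> n"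
          using xi(1) by (simp add: P_def W'_def inner_diff_right inner_commute)
        ultimately show ?thesis by simp
      qed
      then show ?thesis using xi W'_def by auto
    next
      assume "\<exists>e>0. \<forall>x\<in>N. x \<noteq> 0 \<longrightarrow> e \<le> norm x"
      then obtain e where e: "e > 0" "\<And>x. x \<in> N \<Longrightarrow> x \<noteq> 0 \<Longrightarrow> e \<le> norm x" by blast
      define K where "K = N \<inter> {x. e \<le> norm x \<and> norm x \<le> norm x0}"
      have "compact K"
      proof -
        have "closed K" unfolding K_def
          by (intro closed_Int cl closed_Collect_conj closed_Collect_le continuous_intros)
        moreover have "bounded K" unfolding K_def bounded_iff by auto
        ultimately show ?thesis by (simp add: compact_eq_bounded_closed)
      qed
      moreover have "x0 \<in> K" using x0 e by (simp add: K_def)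
      ultimately obtain u where uK: "u \<in> K" and umin: "\<And>y. y \<in> K \<Longrightarrow> norm u \<le> norm y"
        using continuous_attains_inf[of K norm] by (metis continuous_on_norm_id empty_iff)
      have uN: "u \<in> N" and u0: "u \<noteq> 0" using uK e(1) by (auto simp: K_def)
      have umin': "norm u \<le> norm y" if "y \<in> N" "y \<noteq> 0" for y
        using umin[of y] e(2)[OF that] uK that by (force simp: K_def)
      have uW: "u \<in> W" using uN NW by auto
      define P where "P \<equiv> (\<lambda>x. x - ((u \<bullet> x) / (u \<bullet> u)) *\<^sub>R u)"
      have Pd: "\<And>x. P x = x - ((u \<bullet> x) / (u \<bullet> u)) *\<^sub>R u" by (simp add: P_def)
      note pf = proj_facts[OF u0 Pd]
      define W' where "W' = W \<inter> {x. u \<bullet> x = 0}"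
      define N' where "N' = P ` N"
      have sub': "subspace W'" using sW'[OF uW u0] by (simp add: W'_def)
      have N'W': "N' \<subseteq> W'"
      proof
        fix y assume "y \<in> N'"
        then obtain n where n: "n \<in> N" "y = P n" by (auto simp: N'_def)
        have "P n \<in> W" unfolding P_def using n NW uW sW by (intro subspace_diff subspace_scale) auto
        then show "y \<in> W'" using n pf(1) by (simp add: W'_def)
      qed
      have sg': "add_subgroup N'" unfolding add_subgroup_def N'_def
      proof (intro conjI ballI)
        show "0 \<in> P ` N" using N0 pf(6) by (metis image_eqI)
      next
        fix a b assume "a \<in> P ` N" "b \<in> P ` N"
        then show "a + b \<in> P ` N" using Nadd pf(2) by (metis (no_types, lifting) image_iff)
      next
        fix a assume "a \<in> P ` N"
        then show "- a \<in> P ` N" using Nneg pf(3) by (metis (no_types, lifting) image_iff)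
      qed
      have key: "norm u / 2 \<le> norm y" if y: "y \<in> N'" "y \<noteq> 0" for y
      proof -
        obtain n where n: "n \<in> N" "y = P n" using y by (auto simp: N'_def)
        have "P n \<noteq> 0" using y(2) n(2) by blast
        from discrete_key[OF u0 Pd sg uN n(1) umin' this] show ?thesis unfolding n(2) .
      qed
      have closedN': "closed N'"
      proof (rule discrete_imp_closed[of "norm u / 2"])
        show "0 < norm u / 2" using u0 by simp
        show "\<forall>x\<in>N'. \<forall>y\<in>N'. dist y x < norm u / 2 \<longrightarrow> y = x"
        proof (intro ballI impI)
          fix x y assume xy: "x \<in> N'" "y \<in> N'" "dist y x < norm u / 2"
          have "y - x \<in> N'" using sg' xy unfolding add_subgroup_def
            by (metis diff_conv_add_uminus)
          with key xy(3) show "y = x" by (force simp: dist_norm)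
        qed
      qed
      show ?thesis
      proof (cases "N' = W'")
        case False
        then obtain \<xi> where xi: "\<xi> \<in> W'" "\<xi> \<noteq> 0" "\<forall>n\<in>N'. \<xi> \<bullet> n \<in> \<int>"
          using less.hyps[OF dimless[OF uW u0] sW'[OF uW u0]] N'W' closedN' sg'
          unfolding W'_def by blast
        have "\<xi> \<bullet> n \<in> \<int>" if n: "n \<in> N" for n
        proof -
          have "\<xi> \<bullet> P n \<in> \<int>" using xi n by (auto simp: N'_def)
          moreover have "\<xi> \<bullet> P n = \<xi> \<bullet> n"
            using xi(1) by (simp add: P_def W'_def inner_diff_right inner_commute)
          ultimately show ?thesis by simp
        qed
        then show ?thesis using xi W'_def by auto
      next
        case True
        have W'0: "W' = {0}"
        proof (rule ccontr)
          assume "W' \<noteq> {0}"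
          then obtain w where w: "w \<in> W'" "w \<noteq> 0" using sub' subspace_0 by blast
          define w' where "w' = (norm u / (4 * norm w)) *\<^sub>R w"
          have "w' \<in> N'" using True w sub' by (simp add: w'_def subspace_scale)
          moreover have "w' \<noteq> 0" using w u0 by (simp add: w'_def)
          moreover have "norm w' = norm u / 4" using w by (simp add: w'_def)
          moreover have "norm u > 0" using u0 by simp
          ultimately show False using key[of w'] by linarith
        qed
        define \<xi> where "\<xi> = u /\<^sub>R (u \<bullet> u)"
        have "\<xi> \<in> W" using uW sW by (simp add: \<xi>_def subspace_scale)
        moreover have "\<xi> \<noteq> 0" using u0 by (simp add: \<xi>_def)
        moreover have "\<xi> \<bullet> n \<in> \<int>" if n: "n \<in> N" for n
        proof -
          have "P n \<in> W'" using N'W' n by (auto simp: N'_def)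
          then have "P n = 0" using W'0 by simp
          from discrete_line[OF u0 Pd sg uN n umin' this] show ?thesis unfolding \<xi>_def .
        qed
        ultimately show ?thesis by blast
      qed
    qed
  qed
qed

lemma closed_proj:
  fixes A :: "('a::euclidean_space \<times> 'h::topological_space) set"
  assumes "compact F" "closed A" "A \<subseteq> F \<times> UNIV"
  shows "closed (snd ` A)"
proof -
  have cs: "compact_space (top_of_set F)" using assms(1) by (simp add: compact_space_subtopology)
  have "closedin (top_of_set (F \<times> UNIV)) A"
    using assms by (simp add: closed_subset)
  moreover have "top_of_set (F \<times> UNIV) = prod_topology (top_of_set F) (euclidean::'h topology)"
    using subtopology_Times[of euclidean euclidean F UNIV] by (simp add: euclidean_product_topology)
  ultimately have cA: "closedin (prod_topology (top_of_set F) euclidean) A"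
    by simp
  have cm: "closed_map (prod_topology (top_of_set F) euclidean) (euclidean::'h topology) snd"
    by (rule closed_map_snd[OF cs])
  have "closedin euclidean (snd ` A)"
    by (rule cm[unfolded closed_map_def, rule_format, OF cA])
  then show ?thesis by (simp only: closed_closedin)
qed


lemma charG_add: "charG \<xi> (a + b) = charG \<xi> a * charG \<xi> b"
  by (simp add: charG_def inner_add_right distrib_left distrib_right exp_add[symmetric] algebra_simps)

lemma charG_alt: "charG \<xi> y = exp (\<i> * of_real (2 * pi * (\<xi> \<bullet> y)))"
  by (simp add: charG_def algebra_simps)

lemma norm_charG: "norm (charG \<xi> y) = 1"
  unfolding charG_alt by (rule norm_exp_i_times)

lemma charG_cnj: "charG \<xi> y * cnj (charG \<xi> y) = 1"
  using norm_charG[of \<xi> y] by (metis complex_norm_square mult.commute norm_one of_real_1 power_one)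

lemma charG_int: assumes "\<xi> \<bullet> y \<in> \<int>" shows "charG \<xi> y = 1"
proof -
  from assms obtain k where k: "\<xi> \<bullet> y = of_int k" by (auto elim: Ints_cases)
  show ?thesis unfolding charG_def k exp_eq_1 by simp
qed

lemma charG_eq: assumes "\<xi> \<bullet> (a - b) \<in> \<int>" shows "charG \<xi> a = charG \<xi> b"
proof -
  have "charG \<xi> a = charG \<xi> ((a - b) + b)" by simp
  also have "\<dots> = charG \<xi> b" unfolding charG_add charG_int[OF assms] by simp
  finally show ?thesis .
qed

lemma continuous_charG: "continuous_on UNIV (charG \<xi>)"
  unfolding charG_def by (intro continuous_intros)

lemma closure_subgroup_prod:
  fixes S :: "('a::euclidean_space \<times> 'h::topological_ab_group_add) set"
  assumes "add_subgroup S"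
  shows "add_subgroup (closure S)"
proof -
  have S: "0 \<in> S" "\<And>x y. x \<in> S \<Longrightarrow> y \<in> S \<Longrightarrow> x + y \<in> S" "\<And>x. x \<in> S \<Longrightarrow> - x \<in> S"
    using assms by (auto simp: add_subgroup_def)
  define f :: "('a \<times> 'h) \<times> ('a \<times> 'h) \<Rightarrow> 'a \<times> 'h" where
    "f = (\<lambda>p. (fst (fst p) + fst (snd p), snd (fst p) + snd (snd p)))"
  have fplus: "f (x, y) = x + y" for x y by (simp add: f_def prod_eq_iff)
  have "continuous_on UNIV f" unfolding f_def by (intro continuous_intros)
  then have "f ` closure (S \<times> S) \<subseteq> closure S"
  proof (rule image_closure_subset[OF continuous_on_subset])
    show "f ` (S \<times> S) \<subseteq> closure S"
    proof
      fix z assume "z \<in> f ` (S \<times> S)"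
      then obtain x y where "x \<in> S" "y \<in> S" "z = f (x, y)" by blast
      then have "z = x + y" by (simp only: fplus)
      then show "z \<in> closure S" using S(2)[OF \<open>x \<in> S\<close> \<open>y \<in> S\<close>] closure_subset by blast
    qed
  qed auto
  then have add: "x + y \<in> closure S" if "x \<in> closure S" "y \<in> closure S" for x y
  proof -
    have "(x, y) \<in> closure (S \<times> S)" using that by (simp add: closure_Times)
    then have "f (x, y) \<in> closure S" using \<open>f ` closure (S \<times> S) \<subseteq> closure S\<close> by blast
    then show ?thesis by (simp only: fplus)
  qed
  define g :: "'a \<times> 'h \<Rightarrow> 'a \<times> 'h" where "g = (\<lambda>p. (- fst p, - snd p))"
  have gm: "g x = - x" for x by (simp add: g_def prod_eq_iff)
  have "continuous_on UNIV g" unfolding g_def by (intro continuous_intros)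
  then have "g ` closure S \<subseteq> closure S"
  proof (rule image_closure_subset[OF continuous_on_subset])
    show "g ` S \<subseteq> closure S"
    proof
      fix z assume "z \<in> g ` S"
      then obtain x where "x \<in> S" "z = g x" by blast
      then have "z = - x" by (simp only: gm)
      then show "z \<in> closure S" using S(3)[OF \<open>x \<in> S\<close>] closure_subset by blast
    qed
  qed auto
  then have neg: "- x \<in> closure S" if "x \<in> closure S" for x
  proof -
    have "g x \<in> closure S" using that \<open>g ` closure S \<subseteq> closure S\<close> by blast
    then show ?thesis by (simp only: gm)
  qed
  show ?thesis unfolding add_subgroup_def using add neg S(1) closure_subset by blast
qed

lemma dense_sum:
  fixes L :: "('a::euclidean_space \<times> 'h::topological_ab_group_add) set" and D :: "'a set"
  assumes sgL: "add_subgroup L" and dnsH: "closure (snd ` L) = UNIV" and sgD: "add_subgroup D"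
    and F: "compact F" "\<And>z. \<exists>s\<in>D. \<exists>k\<in>F. z = s + k"
    and dual: "dual_lattice D \<inter> fst ` annihilator L = {0}"
  shows "closure {(g + d, h) | g h d. (g, h) \<in> L \<and> d \<in> D} = UNIV"
proof -
  define S where "S = {(g + d, h) | g h d. (g, h) \<in> L \<and> d \<in> D}"
  have L0: "0 \<in> L" and Ladd: "\<And>x y. x \<in> L \<Longrightarrow> y \<in> L \<Longrightarrow> x + y \<in> L"
    and Lneg: "\<And>x. x \<in> L \<Longrightarrow> - x \<in> L" using sgL by (auto simp: add_subgroup_def)
  have D0: "0 \<in> D" and Dadd: "\<And>x y. x \<in> D \<Longrightarrow> y \<in> D \<Longrightarrow> x + y \<in> D"
    and Dneg: "\<And>x. x \<in> D \<Longrightarrow> - x \<in> D" using sgD by (auto simp: add_subgroup_def)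
  have LS: "(g, h) \<in> L \<Longrightarrow> d \<in> D \<Longrightarrow> (g + d, h) \<in> S" for g h d
    unfolding S_def by blast
  have sgS: "add_subgroup S"
    unfolding add_subgroup_def
  proof (intro conjI ballI)
    show "0 \<in> S" using LS[of 0 0 0] L0 D0 by (simp add: zero_prod_def)
  next
    fix x y assume "x \<in> S" "y \<in> S"
    then obtain g h d g' h' d' where "(g, h) \<in> L" "d \<in> D" "x = (g + d, h)"
      "(g', h') \<in> L" "d' \<in> D" "y = (g' + d', h')" unfolding S_def by blast
    moreover have "x + y = (g + g' + (d + d'), h + h')" using calculation by (simp add: algebra_simps)
    moreover have "(g + g' + (d + d'), h + h') \<in> S"
      using LS[of "g + g'" "h + h'" "d + d'"] Ladd[of "(g, h)" "(g', h')"] Dadd calculation by simp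
    ultimately show "x + y \<in> S" by (simp only:)
  next
    fix x assume "x \<in> S"
    then obtain g h d where "(g, h) \<in> L" "d \<in> D" "x = (g + d, h)" unfolding S_def by blast
    moreover have "- x = (- g + - d, - h)" using calculation by simp
    ultimately show "- x \<in> S"
      using LS[of "- g" "- h" "- d"] Lneg[of "(g, h)"] Dneg by simp
  qed
  define M where "M = closure S"
  have sgM: "add_subgroup M" unfolding M_def by (rule closure_subgroup_prod[OF sgS])
  have M0: "0 \<in> M" and Madd: "\<And>x y. x \<in> M \<Longrightarrow> y \<in> M \<Longrightarrow> x + y \<in> M"
    and Mneg: "\<And>x. x \<in> M \<Longrightarrow> - x \<in> M" using sgM by (auto simp: add_subgroup_def)
  have SM: "S \<subseteq> M" unfolding M_def by (rule closure_subset)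
  have clM: "closed M" unfolding M_def by simp
  have LM: "(g, h) \<in> M" if "(g, h) \<in> L" for g h
    using LS[OF that D0] SM by auto
  define N where "N = {g. (g, 0) \<in> M}"
  have clN: "closed N"
  proof -
    have "closed ((\<lambda>g. (g, 0::'h)) -` M)"
      by (rule continuous_closed_vimage[OF clM]) (intro continuous_intros)
    then show ?thesis by (simp add: N_def vimage_def)
  qed
  have sgN: "add_subgroup N" unfolding add_subgroup_def N_def
  proof (intro conjI ballI; simp)
    show "(0, 0) \<in> M" using M0 by (simp add: zero_prod_def)
  next
    fix x y assume "(x, 0::'h) \<in> M" "(y, 0::'h) \<in> M"
    from Madd[OF this] show "(x + y, 0::'h) \<in> M" by simp
  next
    fix x assume "(x, 0::'h) \<in> M"
    from Mneg[OF this] show "(- x, 0::'h) \<in> M" by simp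
  qed
  have NUNIV: "N = UNIV"
  proof (rule ccontr)
    assume "N \<noteq> UNIV"
    then obtain \<xi> where xi: "\<xi> \<noteq> 0" "\<And>n. n \<in> N \<Longrightarrow> \<xi> \<bullet> n \<in> \<int>"
      using closed_subgroup_dual[OF subspace_UNIV _ clN sgN] by blast
    define A where "A = M \<inter> (F \<times> UNIV)"
    have clA: "closed A" unfolding A_def
      by (intro closed_Int clM closed_Times compact_imp_closed F(1) closed_UNIV)
    have AM: "A \<subseteq> M" by (auto simp: A_def)
    have "closed (snd ` A)" by (rule closed_proj[OF F(1) clA]) (auto simp: A_def)
    moreover have "snd ` L \<subseteq> snd ` A"
    proof
      fix h assume "h \<in> snd ` L"
      then obtain g where gh: "(g, h) \<in> L" by force
      obtain s k where sk: "s \<in> D" "k \<in> F" "g = s + k" using F(2)[of g] by blast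
      have "(g + - s, h) \<in> S" using LS[OF gh Dneg[OF sk(1)]] .
      then have "(k, h) \<in> M" using SM sk(3) by (auto simp: algebra_simps)
      then show "h \<in> snd ` A" using sk(2) unfolding A_def by force
    qed
    ultimately have "closure (snd ` L) \<subseteq> snd ` A" by (rule closure_minimal[rotated])
    then have exA: "\<exists>g. (g, h) \<in> A" for h using dnsH by force
    have wd: "charG \<xi> g = charG \<xi> g'" if "(g, h) \<in> M" "(g', h) \<in> M" for g g' h
    proof -
      have "(g, h) + - (g', h) \<in> M" using Madd[OF that(1) Mneg[OF that(2)]] .
      then have "g - g' \<in> N" by (simp add: N_def)
      then show ?thesis by (intro charG_eq xi(2))
    qed
    define \<eta> where "\<eta> h = cnj (charG \<xi> (SOME g. (g, h) \<in> M))" for h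
    have \<eta>eq: "\<eta> h = cnj (charG \<xi> g)" if "(g, h) \<in> M" for g h
    proof -
      have "(SOME g. (g, h) \<in> M, h) \<in> M" using that by (rule someI)
      then show ?thesis unfolding \<eta>_def using wd[OF that] by simp
    qed
    have cont: "continuous_on UNIV \<eta>"
      unfolding continuous_on_closed_vimage[OF closed_UNIV]
    proof (intro allI impI)
      fix B :: "complex set" assume B: "closed B"
      define c where "c g = cnj (charG \<xi> g)" for g
      have cc: "continuous_on UNIV c" unfolding c_def charG_def by (intro continuous_intros)
      have "closed (c -` B)"
        using cc B by (simp add: continuous_on_closed_vimage)
      then have "closed (A \<inter> (c -` B \<times> UNIV))"
        by (intro closed_Int clA closed_Times closed_UNIV)
      then have "closed (snd ` (A \<inter> (c -` B \<times> UNIV)))"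
        by (rule closed_proj[OF F(1)]) (auto simp: A_def)
      moreover have "snd ` (A \<inter> (c -` B \<times> UNIV)) = \<eta> -` B \<inter> UNIV"
      proof (intro equalityI subsetI)
        fix h assume "h \<in> snd ` (A \<inter> (c -` B \<times> UNIV))"
        then obtain g where "(g, h) \<in> A" "c g \<in> B" by force
        then show "h \<in> \<eta> -` B \<inter> UNIV" using \<eta>eq[of g h] AM by (auto simp: c_def)
      next
        fix h assume "h \<in> \<eta> -` B \<inter> UNIV"
        moreover obtain g where "(g, h) \<in> A" using exA by blast
        ultimately show "h \<in> snd ` (A \<inter> (c -` B \<times> UNIV))"
          using \<eta>eq[of g h] AM by (force simp: c_def)
      qed
      ultimately show "closed (\<eta> -` B \<inter> UNIV)" by simp
    qed
    have char: "\<eta> \<in> characters"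
      unfolding characters_def
    proof (intro CollectI conjI allI cont)
      fix x
      obtain g where "(g, x) \<in> A" using exA by blast
      then show "norm (\<eta> x) = 1" using \<eta>eq[of g x] AM norm_charG[of \<xi> g] by auto
    next
      fix x y
      obtain g where g: "(g, x) \<in> M" using exA AM by blast
      obtain g' where g': "(g', y) \<in> M" using exA AM by blast
      have "(g + g', x + y) \<in> M" using Madd[OF g g'] by simp
      then show "\<eta> (x + y) = \<eta> x * \<eta> y"
        using \<eta>eq[OF g] \<eta>eq[OF g'] \<eta>eq[of "g + g'" "x + y"] by (simp add: charG_add)
    qed
    have "(\<xi>, \<eta>) \<in> annihilator L"
      unfolding annihilator_def
    proof (simp only: mem_Collect_eq case_prod_conv, intro conjI char ballI)
      fix p assume "p \<in> L"
      then obtain g h where p: "p = (g, h)" "(g, h) \<in> L" by (cases p) auto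
      show "case p of (g, h) \<Rightarrow> charG \<xi> g * \<eta> h = 1"
        using p \<eta>eq[OF LM[OF p(2)]] charG_cnj by simp
    qed
    then have "\<xi> \<in> fst ` annihilator L" by force
    moreover have "\<xi> \<in> dual_lattice D"
      unfolding dual_lattice_def
    proof (intro CollectI ballI)
      fix y assume "y \<in> D"
      then have "(0 + y, 0) \<in> S" using LS[of 0 0 y] L0 by (simp add: zero_prod_def)
      then have "y \<in> N" using SM by (auto simp: N_def)
      then have "\<xi> \<bullet> y \<in> \<int>" by (rule xi(2))
      then show "y \<bullet> \<xi> \<in> \<int>" by (simp only: inner_commute[of y \<xi>])
    qed
    ultimately have "\<xi> \<in> {0}" using dual by blast
    then show False using xi(1) by simp
  qed
  have "UNIV \<times> snd ` L \<subseteq> M"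
  proof
    fix p :: "'a \<times> 'h" assume "p \<in> UNIV \<times> snd ` L"
    then obtain g h g0 where p: "p = (g, h)" "(g0, h) \<in> L" by force
    have "(g - g0, 0) \<in> M" using NUNIV by (auto simp: N_def)
    from Madd[OF LM[OF p(2)] this] show "p \<in> M" using p(1) by simp
  qed
  then have "closure (UNIV \<times> snd ` L) \<subseteq> M" using clM by (rule closure_minimal)
  then have "M = UNIV" using dnsH by (simp add: closure_Times top.extremum_uniqueI)
  then show ?thesis unfolding M_def S_def .
qed

lemma quot_dense:
  fixes D A :: "'a::euclidean_space set"
  assumes sgD: "add_subgroup D"
    and H: "\<And>V. open V \<Longrightarrow> V \<noteq> {} \<Longrightarrow> \<exists>a\<in>A. \<exists>d\<in>D. a + d \<in> V"
  shows "quot_top D closure_of (qmap D ` A) = topspace (quot_top D)"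
proof -
  have "qmap D -` range (qmap D) = UNIV" by blast
  then have "openin (quot_top D) (range (qmap D))" by (simp add: openin_quot_top)
  then have r1: "range (qmap D) \<subseteq> topspace (quot_top D)" by (rule openin_subset)
  have "openin (quot_top D) (topspace (quot_top D))" by (rule openin_topspace)
  then have r2: "topspace (quot_top D) \<subseteq> range (qmap D)" unfolding openin_quot_top by (rule conjunct1)
  have qshift: "qmap D (a + d) = qmap D a" if "d \<in> D" for a d
  proof -
    have "(\<lambda>y. a + d + y) ` D \<subseteq> (\<lambda>y. a + y) ` D"
    proof
      fix z assume "z \<in> (\<lambda>y. a + d + y) ` D"
      then obtain y where "y \<in> D" "z = a + d + y" by blast
      moreover have "d + y \<in> D" using sgD that \<open>y \<in> D\<close> by (simp add: add_subgroup_def)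
      ultimately show "z \<in> (\<lambda>y. a + y) ` D" by (metis add.assoc imageI)
    qed
    moreover have "(\<lambda>y. a + y) ` D \<subseteq> (\<lambda>y. a + d + y) ` D"
    proof
      fix z assume "z \<in> (\<lambda>y. a + y) ` D"
      then obtain y where "y \<in> D" "z = a + y" by blast
      moreover have "y + - d \<in> D" using sgD that \<open>y \<in> D\<close> unfolding add_subgroup_def by blast
      moreover have "a + y = a + d + (y + - d)" by (simp add: algebra_simps)
      ultimately show "z \<in> (\<lambda>y. a + d + y) ` D" by (metis imageI)
    qed
    ultimately show ?thesis unfolding qmap_def by blast
  qed
  show ?thesis
  proof (rule antisym[OF closure_of_subset_topspace subsetI])
    fix x assume x: "x \<in> topspace (quot_top D)"
    then obtain g where g: "x = qmap D g" using r2 by blast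
    show "x \<in> quot_top D closure_of (qmap D ` A)"
      unfolding in_closure_of
    proof (intro conjI allI impI x)
      fix T assume T: "x \<in> T \<and> openin (quot_top D) T"
      then have "open (qmap D -` T)" by (simp add: openin_quot_top)
      moreover have "g \<in> qmap D -` T" using T g by simp
      ultimately obtain a d where "a \<in> A" "d \<in> D" "a + d \<in> qmap D -` T" using H by blast
      then show "\<exists>y. y \<in> qmap D ` A \<and> y \<in> T" using qshift by auto
    qed
  qed
qed

theorem lemma6p2:
  fixes L :: "('a::euclidean_space \<times> 'h::{topological_ab_group_add, t2_space}) set"
    and D :: "'a set"
  assumes "cut_and_project L"
    and "countable L"
    and "countable (annihilator L)"
    and "lattice_in D"
    and "D \<inter> fst ` L = {0}"
    and "dual_lattice D \<inter> fst ` annihilator L = {0}"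
  shows "inj_on (qmap D) (fst ` L)
    \<and> quot_top D closure_of (qmap D ` fst ` L) = topspace (quot_top D)
    \<and> (\<forall>U. open U \<and> U \<noteq> {} \<longrightarrow>
          quot_top D closure_of (qmap D ` model_set L U) = topspace (quot_top D))"
proof -
  have sgL: "add_subgroup L" and dnsH: "closure (snd ` L) = UNIV"
    using assms(1) by (auto simp: cut_and_project_def lattice_in_def)
  have sgD: "add_subgroup D" and ccD: "cocompact D"
    using assms(4) by (auto simp: lattice_in_def)
  obtain F where F: "compact F" "\<And>z. \<exists>s\<in>D. \<exists>k\<in>F. z = s + k"
    using ccD unfolding cocompact_def by blast
  define S where "S = {(g + d, h) | g h d. (g, h) \<in> L \<and> d \<in> D}"
  have clS: "closure S = UNIV" unfolding S_def
    by (rule dense_sum[OF sgL dnsH sgD F assms(6)])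
  have key: "\<exists>g h d. (g, h) \<in> L \<and> d \<in> D \<and> g + d \<in> V \<and> h \<in> U"
    if "open V" "V \<noteq> {}" "open U" "U \<noteq> {}" for V U
  proof -
    have "open (V \<times> U)" using that by (simp add: open_Times)
    moreover have "V \<times> U \<noteq> {}" using that by simp
    ultimately have "V \<times> U \<inter> S \<noteq> {}" using open_Int_closure_eq_empty[of "V \<times> U" S] clS by simp
    then show ?thesis unfolding S_def by blast
  qed
  have inj: "inj_on (qmap D) (fst ` L)"
  proof (rule inj_onI)
    fix x y assume x: "x \<in> fst ` L" and y: "y \<in> fst ` L" and eq: "qmap D x = qmap D y"
    have D0: "0 \<in> D" using sgD by (simp add: add_subgroup_def)
    have "x \<in> qmap D x" unfolding qmap_def using D0 by (metis add_0_right imageI)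
    then obtain d where d: "d \<in> D" "x = y + d" using eq by (auto simp: qmap_def)
    obtain l1 where l1: "l1 \<in> L" "x = fst l1" using x by blast
    obtain l2 where l2: "l2 \<in> L" "y = fst l2" using y by blast
    have "l1 + - l2 \<in> L" using sgL l1(1) l2(1) unfolding add_subgroup_def by blast
    moreover have "fst (l1 + - l2) = d" using l1 l2 d by (simp add: algebra_simps)
    ultimately have "d \<in> fst ` L" by (metis imageI)
    then have "d = 0" using assms(5) d by blast
    then show "x = y" using d by simp
  qed
  have dense1: "quot_top D closure_of (qmap D ` fst ` L) = topspace (quot_top D)"
  proof (rule quot_dense[OF sgD])
    fix V :: "'a set" assume "open V" "V \<noteq> {}"
    then obtain g h d where "(g, h) \<in> L" "d \<in> D" "g + d \<in> V"
      using key[of V UNIV] by auto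
    then show "\<exists>a\<in>fst ` L. \<exists>d\<in>D. a + d \<in> V" by force
  qed
  have dense2: "quot_top D closure_of (qmap D ` model_set L U) = topspace (quot_top D)"
    if U: "open U" "U \<noteq> {}" for U
  proof (rule quot_dense[OF sgD])
    fix V :: "'a set" assume "open V" "V \<noteq> {}"
    then obtain g h d where "(g, h) \<in> L" "d \<in> D" "g + d \<in> V" "h \<in> U"
      using key[of V U] U by auto
    then show "\<exists>a\<in>model_set L U. \<exists>d\<in>D. a + d \<in> V" unfolding model_set_def by force
  qed
  show ?thesis using inj dense1 dense2 by blast
qed
end
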